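(* Let $m,n\ge 2$ and let $G$ be the ordered graph with vertices $v_1<\dots<v_{m+n}$ whose only edges are $v_1v_{m+n}$ and $v_mv_{m+1}$ (two nested edges: one joining the outermost vertices and one joining the innermost vertices of the parts $\{v_1,\dots,v_m\}$ and $\{v_{m+1},\dots,v_{m+n}\}$). Then $R(G)=2m+2n-2$.
   Context: An ordered graph is a graph together with a specified linear ordering of its vertex set. An ordered graph $G$ is contained in an ordered graph $H$ if there is an order-preserving injection $V(G)\to V(H)$ mapping edges to edges. $R(G)$ denotes the 2-color ordered Ramsey number: the minimum $N$ such that every 2-coloring of the edges of the ordered complete graph on $N$ vertices contains a monochromatic copy of $G$. *)

theory Defs
  imports Main
begin

text \<open>A 2-colouring of the ordered complete graph K_N on {..<N} is a function
c :: nat => nat => bool, where c i j (for i < j < N) is the colour of edge ij.\<close>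

definition ordered_graph :: "nat \<Rightarrow> (nat \<times> nat) set \<Rightarrow> bool" where
  "ordered_graph k E \<longleftrightarrow> (\<forall>(i,j)\<in>E. i < j \<and> j < k)"

definition has_mono_copy :: "nat \<Rightarrow> (nat \<times> nat) set \<Rightarrow> nat \<Rightarrow> (nat \<Rightarrow> nat \<Rightarrow> bool) \<Rightarrow> bool" where
  "has_mono_copy k E N c \<longleftrightarrow>
     (\<exists>b f. strict_mono_on {..<k} f \<and> f ` {..<k} \<subseteq> {..<N} \<and>
            (\<forall>(i,j)\<in>E. c (f i) (f j) = b))"

definition ordered_ramsey :: "nat \<Rightarrow> (nat \<times> nat) set \<Rightarrow> nat" where
  "ordered_ramsey k E = (LEAST N. \<forall>c. has_mono_copy k E N c)"

end

theory Submission
  imports Defs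
begin

lemma smono_gap:
  fixes f :: "nat \<Rightarrow> nat"
  assumes "strict_mono_on {..<k} f" "i \<le> j" "j < k"
  shows "f i + (j - i) \<le> f j"
  using assms(2,3)
proof (induction j)
  case 0 then show ?case by simp
next
  case (Suc j)
  show ?case
  proof (cases "i = Suc j")
    case True then show ?thesis by simp
  next
    case False
    then have "i \<le> j" using Suc by simp
    then have "f i + (j - i) \<le> f j" using Suc by simp
    moreover have "f j < f (Suc j)" using assms(1) Suc.prems
      by (simp add: strict_mono_on_def)
    ultimately show ?thesis using \<open>i \<le> j\<close> by simp
  qed
qed

lemma construct:
  fixes m n a x y d N :: nat and c
  assumes "m \<ge> 2" "n \<ge> 2" "a + (m - 1) \<le> x" "x < y" "y + (n - 1) \<le> d" "d < N"
    "c a d = c x y"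
  shows "has_mono_copy (m + n) {(0, m + n - 1), (m - 1, m)} N c"
proof -
  define f where "f i = (if i < m - 1 then a + i else if i = m - 1 then x
      else if i = m then y else d - (m + n - 1 - i))" for i
  have sm: "strict_mono_on {..<m+n} f"
    unfolding strict_mono_on_def f_def using assms by auto
  have im: "f ` {..<m+n} \<subseteq> {..<N}"
    unfolding f_def using assms by auto
  have "f 0 = a" "f (m+n-1) = d" "f (m-1) = x" "f m = y"
    unfolding f_def using assms by auto
  then have "\<forall>(i,j)\<in>{(0, m + n - 1), (m - 1, m)}. c (f i) (f j) = c a d"
    using assms by auto
  then show ?thesis unfolding has_mono_copy_def using sm im by blast
qed

lemma upper:
  fixes m n :: nat
  assumes "m \<ge> 2" "n \<ge> 2"
  shows "has_mono_copy (m + n) {(0, m + n - 1), (m - 1, m)} (2*m + 2*n - 2) c"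
proof -
  let ?N = "2*m + 2*n - 2"
  let ?L = "m - 1" and ?R = "n - 1"
  have "c 0 (?N - 1) = c ?L (2*?L+?R+1) \<or> c 0 (?N - 1) = c (2*?L) (2*?L+1)
        \<or> c ?L (2*?L+?R+1) = c (2*?L) (2*?L+1)" by auto
  then show ?thesis
  proof (elim disjE)
    assume "c 0 (?N - 1) = c ?L (2*?L+?R+1)"
    then show ?thesis by (intro construct[of m n 0 ?L "2*?L+?R+1" "?N - 1"]) (use assms in auto)
  next
    assume "c 0 (?N - 1) = c (2*?L) (2*?L+1)"
    then show ?thesis by (intro construct[of m n 0 "2*?L" "2*?L+1" "?N - 1"]) (use assms in auto)
  next
    assume "c ?L (2*?L+?R+1) = c (2*?L) (2*?L+1)"
    then show ?thesis by (intro construct[of m n ?L "2*?L" "2*?L+1" "2*?L+?R+1"]) (use assms in auto)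
  qed
qed

lemma lower:
  fixes m n N :: nat
  assumes "m \<ge> 2" "n \<ge> 2" "N < 2*m + 2*n - 2"
  shows "\<not> has_mono_copy (m + n) {(0, m + n - 1), (m - 1, m)} N (\<lambda>i j. j - i \<ge> m + n - 1)"
proof
  assume "has_mono_copy (m + n) {(0, m + n - 1), (m - 1, m)} N (\<lambda>i j. j - i \<ge> m + n - 1)"
  then obtain b f where sm: "strict_mono_on {..<m+n} f" and im: "f ` {..<m+n} \<subseteq> {..<N}"
    and col: "\<forall>(i,j)\<in>{(0, m + n - 1), (m - 1, m)}. (f j - f i \<ge> m + n - 1) = b"
    unfolding has_mono_copy_def by blast
  have g1: "f 0 + (m - 1 - 0) \<le> f (m-1)" by (rule smono_gap[OF sm]) (use assms in auto)
  have g2: "f (m-1) + (m - (m-1)) \<le> f m" by (rule smono_gap[OF sm]) (use assms in auto)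
  have g3: "f m + (m+n-1 - m) \<le> f (m+n-1)" by (rule smono_gap[OF sm]) (use assms in auto)
  have "m+n-1 \<in> {..<m+n}" using assms by simp
  then have d: "f (m+n-1) < N" using im by blast
  have c1: "(f (m+n-1) - f 0 \<ge> m + n - 1) = b" and c2: "(f m - f (m-1) \<ge> m + n - 1) = b"
    using col by auto
  show False using g1 g2 g3 d c1 c2 assms by (cases b) (simp_all, linarith+)
qed

theorem proposition4p1:
  fixes m n :: nat
  assumes "m \<ge> 2" and "n \<ge> 2"
  shows "ordered_ramsey (m + n) {(0, m + n - 1), (m - 1, m)} = 2*m + 2*n - 2"
  unfolding ordered_ramsey_def
proof (rule Least_equality)
  show "\<forall>c. has_mono_copy (m + n) {(0, m + n - 1), (m - 1, m)} (2*m + 2*n - 2) c"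
    using upper assms by blast
next
  fix N assume "\<forall>c. has_mono_copy (m + n) {(0, m + n - 1), (m - 1, m)} N c"
  then show "2*m + 2*n - 2 \<le> N" using lower[OF assms] by (meson not_le)
qed

end
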